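(* For each integer $\lambda$, there are at most finitely many independent Stanley sequences (in root position) with character $\lambda$.
   Context: A set of non-negative integers is 3-free if no three of its elements form an arithmetic progression. For a finite 3-free set $A=\{a_0<\cdots<a_k\}$ of non-negative integers, the Stanley sequence $S(A)=(a_n)_{n\ge0}$ is the increasing sequence with initial terms $a_0,\ldots,a_k$ in which each subsequent $a_{n+1}$ is the smallest integer greater than $a_n$ such that $\{a_0,\ldots,a_{n+1}\}$ is 3-free. Throughout, Stanley sequences are in root position, i.e. $a_0=0$. A Stanley sequence $(a_n)$ is independent with character $\lambda$ if for all sufficiently large $k$: $a_{2^k+i}=a_{2^k}+a_i$ for $0\le i<2^k$, and $a_{2^k}=2a_{2^k-1}-\lambda+1$. *)

theory Defs
  imports Main
begin

definition three_free :: "nat set \<Rightarrow> bool" where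
  "three_free A \<longleftrightarrow>
     (\<forall>x\<in>A. \<forall>y\<in>A. \<forall>z\<in>A. x < y \<and> y < z \<longrightarrow> x + z \<noteq> 2 * y)"

definition stanley_seq_of :: "nat set \<Rightarrow> (nat \<Rightarrow> nat) \<Rightarrow> bool" where
  "stanley_seq_of A a \<longleftrightarrow>
     finite A \<and> A \<noteq> {} \<and> three_free A \<and> strict_mono a \<and>
     a ` {..<card A} = A \<and>
     (\<forall>n. card A - 1 \<le> n \<longrightarrow>
        a (Suc n) = (LEAST m. a n < m \<and> three_free (insert m (a ` {..n}))))"

definition root_stanley :: "(nat \<Rightarrow> nat) \<Rightarrow> bool" where
  "root_stanley a \<longleftrightarrow> (\<exists>A. stanley_seq_of A a) \<and> a 0 = 0"

definition independent_with_char :: "(nat \<Rightarrow> nat) \<Rightarrow> int \<Rightarrow> bool" where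
  "independent_with_char a lam \<longleftrightarrow>
     (\<exists>K. \<forall>k\<ge>K.
        (\<forall>i<2^k. a (2^k + i) = a (2^k) + a i) \<and>
        int (a (2^k)) = 2 * int (a (2^k - 1)) - lam + 1)"

end

theory Submission
  imports Defs
begin

definition gr :: "(nat \<Rightarrow> nat) \<Rightarrow> nat \<Rightarrow> nat" where
  "gr a n = (LEAST m. a n < m \<and> three_free (insert m (a ` {..n})))"

lemma tf_subset: "three_free B \<Longrightarrow> C \<subseteq> B \<Longrightarrow> three_free C"
  unfolding three_free_def by blast

lemma tf_insert_big:
  assumes "three_free X" "\<forall>x\<in>X. x < m" "\<not> three_free (insert m X)"
  shows "\<exists>x\<in>X. \<exists>y\<in>X. x < y \<and> x + m = 2*y"
proof -
  from assms(3) obtain x y z where xyz: "x \<in> insert m X" "y \<in> insert m X" "z \<in> insert m X"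
    "x < y" "y < z" "x + z = 2*y" unfolding three_free_def by blast
  show ?thesis
  proof (cases "z = m")
    case True
    then have "x \<noteq> m" "y \<noteq> m" using xyz by auto
    then show ?thesis using xyz True by blast
  next
    case False
    then have "z \<in> X" using xyz by auto
    then have "x \<noteq> m" "y \<noteq> m" using xyz assms(2) by force+
    then show ?thesis using xyz \<open>z \<in> X\<close> assms(1) unfolding three_free_def by blast
  qed
qed

lemma tf_insert_ok:
  assumes "three_free X" "\<forall>x\<in>X. x \<le> b"
  shows "three_free (insert (2*b+1) X)"
  unfolding three_free_def
proof (intro ballI impI)
  fix x y z assume h: "x \<in> insert (2*b+1) X" "y \<in> insert (2*b+1) X" "z \<in> insert (2*b+1) X"
    "x < y \<and> y < z"
  show "x + z \<noteq> 2 * y"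
  proof (cases "z = 2*b+1")
    case True
    then have "y \<in> X" using h by auto
    then have "y \<le> b" using assms(2) by auto
    then show ?thesis using True by linarith
  next
    case False
    then have "z \<in> X" using h by auto
    then have "z \<le> b" using assms(2) by auto
    then have "x \<in> X" "y \<in> X" using h by auto
    then show ?thesis using assms(1) h \<open>z \<in> X\<close> unfolding three_free_def by blast
  qed
qed

lemma stanley_facts:
  assumes "stanley_seq_of A a"
  shows "strict_mono a" "\<And>n. card A - 1 \<le> n \<Longrightarrow> a (Suc n) = gr a n"
  using assms unfolding stanley_seq_of_def gr_def by auto

lemma tf_all:
  assumes st: "stanley_seq_of A a"
  shows "three_free (a ` {..n})"
proof (induction n)
  case 0
  have "a 0 \<in> A" using st unfolding stanley_seq_of_def
    by (metis card_gt_0_iff image_eqI lessThan_iff)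
  then show ?case using st unfolding stanley_seq_of_def
    by (metis atMost_0 empty_subsetI image_empty image_insert insert_subset tf_subset)
next
  case (Suc n)
  show ?case
  proof (cases "Suc n < card A")
    case True
    then have "a ` {..Suc n} \<subseteq> A" using st unfolding stanley_seq_of_def by auto
    then show ?thesis using st unfolding stanley_seq_of_def using tf_subset by blast
  next
    case False
    then have g: "a (Suc n) = gr a n" using stanley_facts(2)[OF st] by auto
    have sm: "strict_mono a" using stanley_facts(1)[OF st] .
    have w: "a n < 2 * a n + 1 \<and> three_free (insert (2 * a n + 1) (a ` {..n}))"
      using tf_insert_ok[OF Suc.IH, of "a n"] sm by (auto simp: strict_mono_less_eq)
    have "a n < gr a n \<and> three_free (insert (gr a n) (a ` {..n}))"
      unfolding gr_def by (rule LeastI[of _ "2 * a n + 1"], rule w)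
    then show ?thesis using g by (simp add: atMost_Suc)
  qed
qed

lemma key:
  assumes st: "stanley_seq_of A a"
    and ind: "\<forall>k\<ge>K. (\<forall>i<2^k. a (2^k + i) = a (2^k) + a i) \<and>
        int (a (2^k)) = 2 * int (a (2^k - 1)) - lam + 1"
    and gre: "\<forall>n\<ge>N. a (Suc n) = gr a n"
    and Np: "N \<le> Suc p"
    and Pm: "a p < m" and tf: "three_free (insert m (a ` {..p}))"
    and lt: "m < a (Suc p)"
  shows "int m < lam"
proof (rule ccontr)
  assume neg: "\<not> int m < lam"
  have sm: "strict_mono a" using stanley_facts(1)[OF st] .
  define c where "c = a (Suc p) + nat lam + p + 2"
  define k where "k = K + c"
  have kK: "k \<ge> K" unfolding k_def by simp
  have "c < 2^c" by (rule less_exp)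
  also have "2^c \<le> (2::nat)^k" unfolding k_def by (rule power_increasing) auto
  finally have ck: "c < 2^k" .
  define D where "D = a (2^k)"
  define M where "M = a (2^k - 1)"
  have hD: "int D = 2 * int M - lam + 1" using ind kK unfolding D_def M_def by blast
  have split: "\<And>i. i < 2^k \<Longrightarrow> a (2^k + i) = D + a i" using ind kK unfolding D_def by blast
  have Mge: "2^k - 1 \<le> M" unfolding M_def using strict_mono_imp_increasing[OF sm] by blast
  have Mbig: "c \<le> M" using Mge ck by linarith
  have aleM: "\<And>i. i < 2^k \<Longrightarrow> a i \<le> M" unfolding M_def using sm
    by (simp add: strict_mono_less_eq)
  have p1: "Suc p < 2^k" using ck unfolding c_def by linarith
  have e1: "a (2^k + p) = D + a p" using split p1 by simp
  have e2: "a (Suc (2^k + p)) = D + a (Suc p)" using split[of "Suc p"] p1 by simp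
  have "N \<le> 2^k + p" using Np p1 by linarith
  then have g: "a (Suc (2^k + p)) = gr a (2^k + p)" using gre by blast
  let ?X = "a ` {..2^k + p}"
  have "D + m < gr a (2^k + p)" using e2 g lt by simp
  then have "\<not> (a (2^k + p) < D + m \<and> three_free (insert (D + m) ?X))"
    unfolding gr_def by (rule not_less_Least)
  then have ntf: "\<not> three_free (insert (D + m) ?X)" using e1 Pm by simp
  have Xlt: "\<forall>x\<in>?X. x < D + m"
  proof
    fix x assume "x \<in> ?X"
    then obtain i where "i \<le> 2^k + p" "x = a i" by auto
    then have "x \<le> a (2^k + p)" using sm by (simp add: strict_mono_less_eq)
    then show "x < D + m" using e1 Pm by simp
  qed
  obtain x y where xy: "x \<in> ?X" "y \<in> ?X" "x < y" "x + (D + m) = 2 * y"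
    using tf_insert_big[OF tf_all[OF st] Xlt ntf] by blast
  obtain i where i: "i \<le> 2^k + p" "x = a i" using xy(1) by auto
  obtain j where j: "j \<le> 2^k + p" "y = a j" using xy(2) by auto
  show False
  proof (cases "j < 2^k")
    case True
    then have "y \<le> M" using aleM j by simp
    then have "int x + int D + int m \<le> 2 * int M" using xy(4) by linarith
    then show False using hD neg by linarith
  next
    case False
    then obtain j' where j': "j = 2^k + j'" "j' \<le> p" using j(1)
      by (metis add_le_cancel_left le_add_diff_inverse not_less)
    have jp: "j' < 2^k" using j' p1 by linarith
    have yv: "y = D + a j'" using split[OF jp] j' j by simp
    show False
    proof (cases "i < 2^k")
      case True
      then have "x \<le> M" using aleM i by simp
      have "int x + int m = int D + 2 * int (a j')" using xy(4) yv by linarith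
      then have "int M + int m \<ge> int D" using \<open>x \<le> M\<close> by linarith
      then show False using hD Mbig unfolding c_def using lt by linarith
    next
      case False
      then obtain i' where i': "i = 2^k + i'" "i' \<le> p" using i(1)
        by (metis add_le_cancel_left le_add_diff_inverse not_less)
      have ip: "i' < 2^k" using i' p1 by linarith
      have xv: "x = D + a i'" using split[OF ip] i' i by simp
      have lt1: "a i' < a j'" using xy(3) xv yv by simp
      have eq: "a i' + m = 2 * a j'" using xy(4) xv yv by simp
      have lt2: "a j' < m" using Pm j'(2) sm by (meson le_less_trans strict_mono_less_eq)
      have "a i' \<in> insert m (a ` {..p})" "a j' \<in> insert m (a ` {..p})"
        using i' j' by auto
      then show False using tf lt1 lt2 eq unfolding three_free_def by blast
    qed
  qed
qed

definition N0 :: "(nat \<Rightarrow> nat) \<Rightarrow> nat" where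
  "N0 a = (LEAST N. \<forall>n\<ge>N. a (Suc n) = gr a n)"

lemma bound:
  assumes st: "stanley_seq_of A a" and a0: "a 0 = 0"
    and indc: "independent_with_char a lam"
  shows "(\<forall>n\<ge>N0 a. a (Suc n) = gr a n) \<and> a (N0 a) \<le> nat (2 * lam)"
proof -
  have sm: "strict_mono a" using stanley_facts(1)[OF st] .
  have ex: "\<exists>N. \<forall>n\<ge>N. a (Suc n) = gr a n" using stanley_facts(2)[OF st] by blast
  have gre: "\<forall>n\<ge>N0 a. a (Suc n) = gr a n" unfolding N0_def by (rule LeastI_ex[OF ex])
  obtain K where ind: "\<forall>k\<ge>K. (\<forall>i<2^k. a (2^k + i) = a (2^k) + a i) \<and>
        int (a (2^k)) = 2 * int (a (2^k - 1)) - lam + 1"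
    using indc unfolding independent_with_char_def by blast
  have "a (N0 a) \<le> nat (2 * lam)"
  proof (cases "N0 a")
    case 0
    then show ?thesis using a0 by simp
  next
    case (Suc p)
    have "\<not> (\<forall>n\<ge>p. a (Suc n) = gr a n)"
    proof
      assume "\<forall>n\<ge>p. a (Suc n) = gr a n"
      then have "N0 a \<le> p" unfolding N0_def by (rule Least_le)
      then show False using Suc by simp
    qed
    then obtain n where n: "n \<ge> p" "a (Suc n) \<noteq> gr a n" by blast
    have "n = p" using n gre Suc by (metis Suc_leI le_neq_implies_less)
    then have ne: "a (Suc p) \<noteq> gr a p" using n by simp
    have w: "a p < a (Suc p) \<and> three_free (insert (a (Suc p)) (a ` {..p}))"
      using sm tf_all[OF st, of "Suc p"] by (simp add: strict_mono_Suc_iff atMost_Suc)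
    have Pg: "a p < gr a p \<and> three_free (insert (gr a p) (a ` {..p}))"
      unfolding gr_def by (rule LeastI[of _ "a (Suc p)"], rule w)
    have "gr a p \<le> a (Suc p)" unfolding gr_def by (rule Least_le, rule w)
    then have glt: "gr a p < a (Suc p)" using ne by simp
    have Np: "N0 a \<le> Suc p" using Suc by simp
    have gl: "int (gr a p) < lam"
      using key[OF st ind gre Np] Pg glt by blast
    define m where "m = a (Suc p) - 1"
    have mgt: "a p < m" using Pg glt unfolding m_def by linarith
    have mlt: "m < a (Suc p)" using glt unfolding m_def by linarith
    have "int m < 2 * lam"
    proof (cases "three_free (insert m (a ` {..p}))")
      case True
      then have "int m < lam" using key[OF st ind gre Np mgt True mlt] by blast
      then show ?thesis using gl by linarith
    next
      case False
      have Xlt: "\<forall>x\<in>a ` {..p}. x < m"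
      proof
        fix x assume "x \<in> a ` {..p}"
        then obtain i where "i \<le> p" "x = a i" by auto
        then have "x \<le> a p" using sm by (simp add: strict_mono_less_eq)
        then show "x < m" using mgt by simp
      qed
      obtain x y where xy: "x \<in> a ` {..p}" "y \<in> a ` {..p}" "x < y" "x + m = 2 * y"
        using tf_insert_big[OF tf_all[OF st] Xlt False] by blast
      obtain j where "j \<le> p" "y = a j" using xy(2) by auto
      then have "y \<le> a p" using sm by (simp add: strict_mono_less_eq)
      then have "m \<le> 2 * a p" using xy(4) by linarith
      then show ?thesis using Pg gl by linarith
    qed
    then have "int (a (Suc p)) \<le> 2 * lam" unfolding m_def using mlt by linarith
    then have "a (Suc p) \<le> nat (2 * lam)" by linarith
    then show ?thesis using Suc by simp
  qed
  then show ?thesis using gre by blast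
qed

theorem mainTheorem12:
  fixes lam :: int
  shows "finite {a :: nat \<Rightarrow> nat. root_stanley a \<and> independent_with_char a lam}"
proof -
  define S where "S = {a :: nat \<Rightarrow> nat. root_stanley a \<and> independent_with_char a lam}"
  define L where "L = nat (2 * lam)"
  define f where "f = (\<lambda>a::nat \<Rightarrow> nat. map a [0..<Suc (N0 a)])"
  have props: "strict_mono a \<and> (\<forall>n\<ge>N0 a. a (Suc n) = gr a n) \<and> a (N0 a) \<le> L"
    if "a \<in> S" for a
  proof -
    from that obtain A where st: "stanley_seq_of A a" and a0: "a 0 = 0"
      and ic: "independent_with_char a lam"
      unfolding S_def root_stanley_def by blast
    show ?thesis using bound[OF st a0 ic] stanley_facts(1)[OF st] unfolding L_def by blast
  qed
  have img: "f ` S \<subseteq> {xs. set xs \<subseteq> {..L} \<and> length xs \<le> Suc L}"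
  proof
    fix xs assume "xs \<in> f ` S"
    then obtain a where a: "a \<in> S" "xs = f a" by blast
    have sm: "strict_mono a" and bd: "a (N0 a) \<le> L" using props[OF a(1)] by auto
    have "\<forall>i \<le> N0 a. a i \<le> L" using sm bd
      by (meson le_trans strict_mono_less_eq)
    then have "set xs \<subseteq> {..L}" using a(2) unfolding f_def by auto
    moreover have "N0 a \<le> L" using strict_mono_imp_increasing[OF sm, of "N0 a"] bd by linarith
    then have "length xs \<le> Suc L" using a(2) unfolding f_def by simp
    ultimately show "xs \<in> {xs. set xs \<subseteq> {..L} \<and> length xs \<le> Suc L}" by blast
  qed
  have inj: "inj_on f S"
  proof
    fix a b assume a: "a \<in> S" and b: "b \<in> S" and eq: "f a = f b"
    have ga: "\<forall>n\<ge>N0 a. a (Suc n) = gr a n" using props[OF a] by blast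
    have gb: "\<forall>n\<ge>N0 b. b (Suc n) = gr b n" using props[OF b] by blast
    have NN: "N0 a = N0 b" using eq unfolding f_def by (metis length_map length_upt diff_zero Suc_inject)
    have low: "a i = b i" if "i \<le> N0 a" for i
    proof -
      have "map a [0..<Suc (N0 a)] ! i = map b [0..<Suc (N0 b)] ! i"
        using eq unfolding f_def by simp
      then show ?thesis using that NN by (simp del: upt_Suc)
    qed
    have "a n = b n" for n
    proof (induction n rule: less_induct)
      case (less n)
      show ?case
      proof (cases "n \<le> N0 a")
        case True
        then show ?thesis using low by blast
      next
        case False
        then obtain n' where n': "n = Suc n'" "n' \<ge> N0 a"
          by (metis Suc_le_D not_less_eq_eq)
        have "a ` {..n'} = b ` {..n'}" using less n' by (intro image_cong) auto
        moreover have "a n' = b n'" using less n' by simp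
        ultimately have "gr a n' = gr b n'" unfolding gr_def by simp
        then show ?thesis using ga gb n' NN by simp
      qed
    qed
    then show "a = b" by blast
  qed
  have "finite (f ` S)"
    by (rule finite_subset[OF img]) (rule finite_lists_length_le, simp)
  then have "finite S" using inj by (rule finite_imageD)
  then show ?thesis unfolding S_def .
qed

end
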